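(* Let $G$ be a connected chordal graph. Then there exists a spanning cactus subgraph of $G$ with the maximum possible number of edges (among all spanning cactus subgraphs of $G$) in which every cycle has length $3$.
   Context: All graphs are finite, simple and undirected. A graph is chordal if it has no induced cycle of length greater than $3$. A cactus is a connected graph in which every edge lies in at most one cycle. A spanning cactus subgraph of $G$ is a subgraph of $G$ with vertex set $V(G)$ that is a cactus. *)

theory Defs
  imports Main
begin

definition graph :: "'a set \<Rightarrow> 'a set set \<Rightarrow> bool" where
  "graph V E \<longleftrightarrow> finite V \<and> (\<forall>e\<in>E. \<exists>x y. x \<noteq> y \<and> x \<in> V \<and> y \<in> V \<and> e = {x, y})"

definition connected_graph :: "'a set \<Rightarrow> 'a set set \<Rightarrow> bool" where
  "connected_graph V E \<longleftrightarrow> (\<forall>u\<in>V. \<forall>v\<in>V. (u, v) \<in> {(x, y). {x, y} \<in> E}\<^sup>*)"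

definition cycle_edges :: "'a list \<Rightarrow> 'a set set" where
  "cycle_edges c = {{c ! i, c ! ((i + 1) mod length c)} | i. i < length c}"

definition is_cycle :: "'a set \<Rightarrow> 'a set set \<Rightarrow> 'a list \<Rightarrow> bool" where
  "is_cycle V E c \<longleftrightarrow> 3 \<le> length c \<and> distinct c \<and> set c \<subseteq> V \<and> cycle_edges c \<subseteq> E"

definition induced_cycle :: "'a set \<Rightarrow> 'a set set \<Rightarrow> 'a list \<Rightarrow> bool" where
  "induced_cycle V E c \<longleftrightarrow> is_cycle V E c \<and>
     (\<forall>x\<in>set c. \<forall>y\<in>set c. {x, y} \<in> E \<longrightarrow> {x, y} \<in> cycle_edges c)"

definition chordal :: "'a set \<Rightarrow> 'a set set \<Rightarrow> bool" where
  "chordal V E \<longleftrightarrow> (\<forall>c. induced_cycle V E c \<longrightarrow> length c \<le> 3)"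

definition cactus :: "'a set \<Rightarrow> 'a set set \<Rightarrow> bool" where
  "cactus V E \<longleftrightarrow> graph V E \<and> connected_graph V E \<and>
     (\<forall>e\<in>E. \<forall>c1 c2. is_cycle V E c1 \<and> is_cycle V E c2 \<and> e \<in> cycle_edges c1 \<and> e \<in> cycle_edges c2
        \<longrightarrow> cycle_edges c1 = cycle_edges c2)"

definition spanning_cactus :: "'a set \<Rightarrow> 'a set set \<Rightarrow> 'a set set \<Rightarrow> bool" where
  "spanning_cactus V E F \<longleftrightarrow> F \<subseteq> E \<and> cactus V F"

end

theory Submission
  imports Defs
begin

fun pe :: "'a list \<Rightarrow> 'a set set" where
  "pe [] = {}" | "pe [x] = {}" | "pe (x # y # l) = insert {x, y} (pe (y # l))"

lemma pe_Cons: "pe (x # l) = (if l = [] then {} else insert {x, hd l} (pe l))"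
  by (cases l) auto

lemma pe_append_Cons: "pe (xs @ y # ys) = pe (xs @ [y]) \<union> pe (y # ys)"
proof (induction xs)
  case Nil then show ?case by simp
next
  case (Cons x xs) then show ?case by (cases xs) auto
qed

lemma pe_snoc: "pe (xs @ [y]) = (if xs = [] then {} else insert {last xs, y} (pe xs))"
proof (induction xs)
  case Nil then show ?case by simp
next
  case (Cons x xs) then show ?case by (cases xs) auto
qed

lemma pe_sub: "e \<in> pe l \<Longrightarrow> e \<subseteq> set l"
  by (induction l rule: pe.induct) auto

lemma pe_rev: "pe (rev l) = pe l"
proof (induction l)
  case Nil then show ?case by simp
next
  case (Cons x l) then show ?case
    by (cases "l = []") (simp_all add: pe_snoc pe_Cons last_rev insert_commute)
qed
lemma pe_nth: "pe l = {{l ! i, l ! (i + 1)} | i. i + 1 < length l}"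
proof (induction l rule: pe.induct)
  case (3 x y l)
  let ?L = "x # y # l"
  show ?case
  proof (rule set_eqI, rule iffI)
    fix e assume "e \<in> pe ?L"
    then consider "e = {x, y}" | "e \<in> pe (y # l)" by auto
    then show "e \<in> {{?L ! i, ?L ! (i + 1)} |i. i + 1 < length ?L}"
    proof cases
      case 1 then show ?thesis by (intro CollectI exI[of _ 0]) simp
    next
      case 2
      then obtain i where "e = {(y # l) ! i, (y # l) ! (i + 1)}" "i + 1 < length (y # l)"
        using 3 by blast
      then show ?thesis by (intro CollectI exI[of _ "Suc i"]) simp
    qed
  next
    fix e assume "e \<in> {{?L ! i, ?L ! (i + 1)} |i. i + 1 < length ?L}"
    then obtain i where i: "e = {?L ! i, ?L ! (i + 1)}" "i + 1 < length ?L" by blast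
    show "e \<in> pe ?L"
    proof (cases i)
      case 0 then show ?thesis using i by simp
    next
      case (Suc j)
      then have "e = {(y # l) ! j, (y # l) ! (j + 1)}" "j + 1 < length (y # l)" using i by auto
      then have "e \<in> pe (y # l)" using 3 by blast
      then show ?thesis by simp
    qed
  qed
qed auto


lemma ce_pe: assumes "c \<noteq> []" shows "cycle_edges c = pe (c @ [hd c])"
proof -
  have "pe (c @ [hd c]) = {{(c @ [hd c]) ! i, (c @ [hd c]) ! (i + 1)} | i. i + 1 < length (c @ [hd c])}"
    by (rule pe_nth)
  also have "\<dots> = cycle_edges c"
    unfolding cycle_edges_def
  proof (rule Collect_cong, rule iffI)
    fix e assume "\<exists>i. e = {(c @ [hd c]) ! i, (c @ [hd c]) ! (i + 1)} \<and> i + 1 < length (c @ [hd c])"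
    then obtain i where i: "e = {(c @ [hd c]) ! i, (c @ [hd c]) ! (i + 1)}" "i < length c" by auto
    show "\<exists>i. e = {c ! i, c ! ((i + 1) mod length c)} \<and> i < length c"
    proof (cases "i + 1 < length c")
      case True then show ?thesis using i by (auto simp: nth_append)
    next
      case False then have "i + 1 = length c" using i by auto
      then show ?thesis using i assms by (auto simp: nth_append hd_conv_nth)
    qed
  next
    fix e assume "\<exists>i. e = {c ! i, c ! ((i + 1) mod length c)} \<and> i < length c"
    then obtain i where i: "e = {c ! i, c ! ((i + 1) mod length c)}" "i < length c" by auto
    show "\<exists>i. e = {(c @ [hd c]) ! i, (c @ [hd c]) ! (i + 1)} \<and> i + 1 < length (c @ [hd c])"
    proof (cases "i + 1 < length c")
      case True then show ?thesis using i by (intro exI[of _ i]) (auto simp: nth_append)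
    next
      case False then have "i + 1 = length c" using i by auto
      then show ?thesis using i assms by (intro exI[of _ i]) (auto simp: nth_append hd_conv_nth)
    qed
  qed
  finally show ?thesis by simp
qed
lemma ce_rotate1: "cycle_edges (rotate1 c) = cycle_edges c"
proof (cases c)
  case Nil then show ?thesis by simp
next
  case (Cons x l)
  show ?thesis
  proof (cases "l = []")
    case True then show ?thesis using Cons by simp
  next
    case False
    have "cycle_edges (rotate1 c) = pe (l @ x # [hd l])" using Cons False by (simp add: ce_pe)
    also have "\<dots> = insert {x, hd l} (pe (l @ [x]))" by (subst pe_append_Cons) (simp add: insert_commute)
    also have "\<dots> = cycle_edges c" using Cons False by (simp add: ce_pe pe_Cons)
    finally show ?thesis .
  qed
qed

lemma ce_rotate: "cycle_edges (rotate k c) = cycle_edges c"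
  by (induction k) (auto simp: ce_rotate1)

lemma ce_rev: "cycle_edges (rev c) = cycle_edges c"
proof (cases "c = []")
  case True then show ?thesis by simp
next
  case False
  have "pe (rev c @ [last c]) = pe (rev (last c # c))" by simp
  also have "\<dots> = pe (last c # c)" by (rule pe_rev)
  also have "\<dots> = pe (c @ [hd c])" using False by (simp add: pe_Cons pe_snoc)
  finally show ?thesis using False by (simp add: ce_pe hd_rev)
qed
lemma cyc_rotate: "is_cycle V F c \<Longrightarrow> is_cycle V F (rotate k c)"
  by (simp add: is_cycle_def ce_rotate)

lemma cyc_rev: "is_cycle V F c \<Longrightarrow> is_cycle V F (rev c)"
  by (simp add: is_cycle_def ce_rev)

lemma ce_form: "cycle_edges (u # v # q) = insert {u, v} (pe (v # q @ [u]))"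
  by (simp add: ce_pe)

lemma nopair: assumes "distinct (u # v # q)" "q \<noteq> []" shows "{u, v} \<notin> pe (v # q @ [u])"
proof
  assume h: "{u, v} \<in> pe (v # q @ [u])"
  have "pe (v # q @ [u]) = insert {v, hd q} (pe (q @ [u]))" using assms by (simp add: pe_Cons)
  moreover have "{u, v} \<notin> pe (q @ [u])"
  proof
    assume "{u, v} \<in> pe (q @ [u])"
    then have "v \<in> set (q @ [u])" using pe_sub by blast
    then show False using assms(1) by auto
  qed
  moreover have "{u, v} \<noteq> {v, hd q}"
  proof
    assume "{u, v} = {v, hd q}"
    then have "u = hd q \<or> u = v" by (simp add: doubleton_eq_iff) blast
    then show False using assms hd_in_set[OF assms(2)] by auto
  qed
  ultimately show False using h by simp
qed

lemma ce_sub: assumes "e \<in> cycle_edges c" shows "e \<subseteq> set c"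
proof -
  obtain i where i: "e = {c ! i, c ! ((i + 1) mod length c)}" "i < length c"
    using assms by (auto simp: cycle_edges_def)
  have "(i + 1) mod length c < length c" using i(2) by (intro mod_less_divisor) auto
  then show ?thesis using i by (simp add: nth_mem)
qed

lemma norm: assumes "is_cycle V F c" "{u, v} \<in> cycle_edges c"
  shows "\<exists>q. is_cycle V F (u # v # q) \<and> cycle_edges (u # v # q) = cycle_edges c"
proof -
  let ?n = "length c"
  obtain i where i: "i < ?n" "{u, v} = {c ! i, c ! ((i + 1) mod ?n)}"
    using assms(2) by (auto simp: cycle_edges_def)
  have n3: "3 \<le> ?n" using assms(1) by (simp add: is_cycle_def)
  have cne: "c \<noteq> []" "Suc 0 < length c" using n3 by auto
  obtain y0 y1 q where r: "rotate i c = y0 # y1 # q"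
    using n3 by (metis length_rotate Suc_le_length_iff numeral_3_eq_3)
  have "y0 = rotate i c ! 0" using r by simp
  then have y0: "y0 = c ! i" using nth_rotate[of 0 c i] cne i by simp
  have "y1 = rotate i c ! 1" using r by simp
  then have y1: "y1 = c ! ((i + 1) mod ?n)" using nth_rotate[of 1 c i] cne i by simp
  have c1: "is_cycle V F (y0 # y1 # q)" "cycle_edges (y0 # y1 # q) = cycle_edges c"
    using r cyc_rotate[OF assms(1)] ce_rotate by metis+
  show ?thesis
  proof (cases "u = y0 \<and> v = y1")
    case True then show ?thesis using c1 by blast
  next
    case False
    then have uv: "u = y1" "v = y0" using i y0 y1 by (auto simp: doubleton_eq_iff)
    have e: "rotate (length (rev q)) (rev q @ [u, v]) = u # v # rev q" by (metis rotate_append append_Cons append_Nil)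
    have "rev (y0 # y1 # q) = rev q @ [u, v]" using uv by simp
    then have "is_cycle V F (u # v # rev q) \<and> cycle_edges (u # v # rev q) = cycle_edges c"
      using c1 e cyc_rotate cyc_rev ce_rotate ce_rev by metis
    then show ?thesis by blast
  qed
qed

lemma path_conn: "pe l \<subseteq> F \<Longrightarrow> l \<noteq> [] \<Longrightarrow> (hd l, last l) \<in> {(x, y). {x, y} \<in> F}\<^sup>*"
proof (induction l rule: pe.induct)
  case (3 x y l)
  then have "(y, last (y # l)) \<in> {(x, y). {x, y} \<in> F}\<^sup>*" by simp
  moreover have "(x, y) \<in> {(x, y). {x, y} \<in> F}" using 3 by simp
  ultimately show ?case by (simp add: converse_rtrancl_into_rtrancl)
qed auto

lemma conn_mono:
  assumes "connected_graph V F" "\<And>x y. {x, y} \<in> F \<Longrightarrow> (x, y) \<in> {(x, y). {x, y} \<in> F'}\<^sup>*"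
  shows "connected_graph V F'"
proof -
  have "{(x, y). {x, y} \<in> F} \<subseteq> {(x, y). {x, y} \<in> F'}\<^sup>*" using assms(2) by auto
  then have "{(x, y). {x, y} \<in> F}\<^sup>* \<subseteq> {(x, y). {x, y} \<in> F'}\<^sup>*" by (rule rtrancl_subset_rtrancl)
  then show ?thesis using assms(1) unfolding connected_graph_def by blast
qed

lemma conn_remove:
  assumes "is_cycle V F (u # v # q)" "connected_graph V F"
  shows "connected_graph V (F - {{u, v}})"
proof -
  have q: "q \<noteq> []" "distinct (u # v # q)" using assms(1) by (auto simp: is_cycle_def)
  have sub: "pe (v # q @ [u]) \<subseteq> F - {{u, v}}"
    using assms(1) nopair[OF q(2) q(1)] by (auto simp: is_cycle_def ce_form)
  have p1: "(v, u) \<in> {(x, y). {x, y} \<in> F - {{u, v}}}\<^sup>*"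
    using path_conn[OF sub] by simp
  have "pe (rev (v # q @ [u])) \<subseteq> F - {{u, v}}" using sub by (simp only: pe_rev)
  from path_conn[OF this]
  have p2: "(u, v) \<in> {(x, y). {x, y} \<in> F - {{u, v}}}\<^sup>*" by (simp add: hd_rev last_rev)
  show ?thesis
  proof (rule conn_mono[OF assms(2)])
    fix x y assume xy: "{x, y} \<in> F"
    show "(x, y) \<in> {(x, y). {x, y} \<in> F - {{u, v}}}\<^sup>*"
    proof (cases "{x, y} = {u, v}")
      case True
      then have "(x = u \<and> y = v) \<or> (x = v \<and> y = u)" by (simp add: doubleton_eq_iff)
      then show ?thesis using p1 p2 by blast
    next
      case False then show ?thesis using xy by blast
    qed
  qed
qed

lemma ce_mem: "i < length c \<Longrightarrow> {c ! i, c ! ((i + 1) mod length c)} \<in> cycle_edges c"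
  by (auto simp: cycle_edges_def)

lemma graph_fin: assumes "graph V E" shows "finite E"
proof -
  have "E \<subseteq> Pow V" using assms by (auto simp: graph_def)
  moreover have "finite V" using assms by (simp add: graph_def)
  ultimately show ?thesis by (meson finite_Pow_iff finite_subset)
qed

lemma graph_sub: "graph V E \<Longrightarrow> F \<subseteq> E \<Longrightarrow> graph V F"
  by (auto simp: graph_def)

lemma exists_sc: assumes "graph V E" "connected_graph V E" shows "\<exists>F. spanning_cactus V E F"
proof -
  obtain T where T: "T \<subseteq> E" "connected_graph V T"
    and min: "\<And>T'. T' \<subseteq> E \<and> connected_graph V T' \<Longrightarrow> card T \<le> card T'"
    using ex_has_least_nat[of "\<lambda>T. T \<subseteq> E \<and> connected_graph V T" E card] assms(2) by blast
  have finT: "finite T" using graph_fin[OF assms(1)] T(1) finite_subset by blast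
  have nocyc: "\<not> is_cycle V T c" for c
  proof
    assume c: "is_cycle V T c"
    then have "0 < length c" by (auto simp: is_cycle_def)
    then have "{c ! 0, c ! ((0 + 1) mod length c)} \<in> cycle_edges c" by (rule ce_mem)
    then obtain u v q where cyc: "is_cycle V T (u # v # q)"
      using norm[OF c] by blast
    have uv: "{u, v} \<in> T" using cyc by (auto simp: is_cycle_def ce_form)
    have "connected_graph V (T - {{u, v}})" by (rule conn_remove[OF cyc T(2)])
    moreover have "T - {{u, v}} \<subseteq> E" using T(1) by blast
    ultimately have "card T \<le> card (T - {{u, v}})" using min by blast
    moreover have "card (T - {{u, v}}) < card T" by (rule card_Diff1_less[OF finT uv])
    ultimately show False by simp
  qed
  have "cactus V T" unfolding cactus_def using graph_sub[OF assms(1) T(1)] T(2) nocyc by blast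
  then show ?thesis using T(1) by (auto simp: spanning_cactus_def)
qed

lemma idx_edge:
  assumes "distinct c" "i < length c" "j < length c" "{c ! i, c ! j} \<in> cycle_edges c"
  shows "j = (i + 1) mod length c \<or> i = (j + 1) mod length c"
proof -
  obtain k where k: "k < length c" "{c ! i, c ! j} = {c ! k, c ! ((k + 1) mod length c)}"
    using assms(4) by (auto simp: cycle_edges_def)
  have m: "(k + 1) mod length c < length c" using k(1) by (intro mod_less_divisor) auto
  from k(2) have "(c ! i = c ! k \<and> c ! j = c ! ((k + 1) mod length c)) \<or>
      (c ! i = c ! ((k + 1) mod length c) \<and> c ! j = c ! k)" by (simp add: doubleton_eq_iff)
  then show ?thesis using assms(1-3) k(1) m by (auto simp: nth_eq_iff_index_eq)
qed

lemma chord: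
  assumes g: "graph V E" and c: "is_cycle V E c" and ij: "i < length c" "j < length c"
    and e: "{c ! i, c ! j} \<in> E" and ne: "{c ! i, c ! j} \<notin> cycle_edges c"
  shows "\<exists>i' j'. i' < j' \<and> j' < length c \<and> 2 \<le> j' - i' \<and> j' - i' + 2 \<le> length c
          \<and> {c ! i', c ! j'} = {c ! i, c ! j}"
proof -
  let ?n = "length c"
  have dist: "distinct c" using c by (simp add: is_cycle_def)
  have "i \<noteq> j"
  proof
    assume "i = j"
    then have "{c ! i} \<in> E" using e by simp
    then show False using g unfolding graph_def by (auto simp: doubleton_eq_iff)
  qed
  define i' where "i' = min i j"
  define j' where "j' = max i j"
  have eq: "{c ! i', c ! j'} = {c ! i, c ! j}"
    unfolding i'_def j'_def by (cases "i \<le> j") (auto simp: min_def max_def insert_commute)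
  have lt: "i' < j'" "j' < ?n" using \<open>i \<noteq> j\<close> ij unfolding i'_def j'_def by auto
  have ne': "{c ! i', c ! j'} \<notin> cycle_edges c" using ne eq by simp
  have d2: "2 \<le> j' - i'"
  proof (rule ccontr)
    assume "\<not> 2 \<le> j' - i'"
    then have "j' = i' + 1" using lt by auto
    then have "{c ! i', c ! ((i' + 1) mod ?n)} = {c ! i', c ! j'}" using lt by simp
    then show False using ce_mem[of i' c] lt ne' by simp
  qed
  have d3: "j' - i' + 2 \<le> ?n"
  proof (rule ccontr)
    assume "\<not> j' - i' + 2 \<le> ?n"
    then have "i' = 0" "j' = ?n - 1" using lt by auto
    moreover have "(j' + 1) mod ?n = 0" proof - have "j' + 1 = ?n" using \<open>j' = ?n - 1\<close> lt by linarith then show ?thesis by simp qed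
    ultimately have "{c ! j', c ! ((j' + 1) mod ?n)} = {c ! i', c ! j'}" by (simp add: insert_commute)
    then show False using ce_mem[of j' c] lt ne' by simp
  qed
  show ?thesis using lt d2 d3 eq by blast
qed

lemma ear:
  assumes g: "graph V E" and ch: "chordal V E" and c: "is_cycle V E c" and l4: "4 \<le> length c"
  shows "\<exists>i. i + 2 < length c \<and> {c ! i, c ! (i + 2)} \<in> E"
proof -
  let ?n = "length c"
  define P where "P = (\<lambda>p. fst p < snd p \<and> snd p < ?n \<and> 2 \<le> snd p - fst p \<and> snd p - fst p + 2 \<le> ?n
      \<and> {c ! fst p, c ! snd p} \<in> E)"
  have "\<not> induced_cycle V E c" using ch l4 unfolding chordal_def by fastforce
  then obtain x y where xy: "x \<in> set c" "y \<in> set c" "{x, y} \<in> E" "{x, y} \<notin> cycle_edges c"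
    using c unfolding induced_cycle_def by blast
  then obtain i j where ij: "i < ?n" "j < ?n" "x = c ! i" "y = c ! j" by (auto simp: in_set_conv_nth)
  obtain i0 j0 where "i0 < j0 \<and> j0 < ?n \<and> 2 \<le> j0 - i0 \<and> j0 - i0 + 2 \<le> ?n
          \<and> {c ! i0, c ! j0} = {c ! i, c ! j}"
    using chord[OF g c ij(1,2)] xy ij by blast
  then have "P (i0, j0)" using xy ij unfolding P_def by simp
  then obtain p where Pp: "P p" and minp: "\<And>p'. P p' \<Longrightarrow> snd p - fst p \<le> snd p' - fst p'"
    using ex_has_least_nat[of P "(i0, j0)" "\<lambda>p. snd p - fst p"] by blast
  define a where "a = fst p"
  define b where "b = snd p"
  have ab: "a < b" "b < ?n" "2 \<le> b - a" "b - a + 2 \<le> ?n" "{c ! a, c ! b} \<in> E"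
    using Pp unfolding P_def a_def b_def by auto
  have "b - a = 2"
  proof (rule ccontr)
    assume "b - a \<noteq> 2"
    then have b3: "3 \<le> b - a" using ab by auto
    define m where "m = b - a + 1"
    define d where "d = take m (drop a c)"
    have ld: "length d = m" unfolding d_def m_def using ab by auto
    have dn: "k < m \<Longrightarrow> d ! k = c ! (a + k)" for k
      unfolding d_def m_def using ab by auto
    have dist: "distinct d" unfolding d_def using c by (simp add: is_cycle_def)
    have setd: "set d \<subseteq> V" unfolding d_def using c
      by (meson dual_order.trans is_cycle_def set_drop_subset set_take_subset)
    have ced: "cycle_edges d \<subseteq> E"
    proof
      fix e assume "e \<in> cycle_edges d"
      then obtain k where k: "k < m" "e = {d ! k, d ! ((k + 1) mod m)}"
        unfolding cycle_edges_def ld by blast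
      show "e \<in> E"
      proof (cases "k + 1 < m")
        case True
        then have "e = {c ! (a + k), c ! ((a + k + 1) mod ?n)}"
          using k dn ab unfolding m_def by auto
        moreover have "a + k < ?n" using k ab unfolding m_def by auto
        ultimately have "e \<in> cycle_edges c" using ce_mem by simp
        then show ?thesis using c by (auto simp: is_cycle_def)
      next
        case False
        then have "k + 1 = m" using k by simp
        then have "e = {c ! b, c ! a}" using k dn ab unfolding m_def by auto
        then show ?thesis using ab by (simp add: insert_commute)
      qed
    qed
    have cd: "is_cycle V E d" unfolding is_cycle_def using ld b3 dist setd ced unfolding m_def by simp
    have "\<not> induced_cycle V E d" using ch ld b3 unfolding chordal_def m_def by fastforce
    then obtain x' y' where xy': "x' \<in> set d" "y' \<in> set d" "{x', y'} \<in> E" "{x', y'} \<notin> cycle_edges d"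
      using cd unfolding induced_cycle_def by blast
    then obtain p1 q1 where pq: "p1 < m" "q1 < m" "x' = d ! p1" "y' = d ! q1"
      by (auto simp: in_set_conv_nth ld)
    obtain p' q' where pq': "p' < q'" "q' < m" "2 \<le> q' - p'" "q' - p' + 2 \<le> m"
         "{d ! p', d ! q'} = {d ! p1, d ! q1}"
      using chord[OF g cd, of p1 q1] pq xy' ld by auto
    have "P (a + p', a + q')"
      unfolding P_def using pq' ab dn[of p'] dn[of q'] xy' pq unfolding m_def by auto
    from minp[OF this] have "b - a \<le> q' - p'" unfolding a_def b_def by simp
    then show False using pq' unfolding m_def by simp
  qed
  then have "b = a + 2" using ab by simp
  then show ?thesis using ab by (intro exI[of _ a]) simp
qed

lemma ce_snoc: "c \<noteq> [] \<Longrightarrow> cycle_edges c = insert {last c, hd c} (pe c)"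
  by (simp add: ce_pe pe_snoc)

definition lc :: "'a set \<Rightarrow> 'a set set \<Rightarrow> 'a set set" where
  "lc V G = {e \<in> G. \<exists>c. is_cycle V G c \<and> 4 \<le> length c \<and> e \<in> cycle_edges c}"

lemma exchange:
  assumes cac: "cactus V F" and FE: "F \<subseteq> E" and gE: "graph V E"
    and C: "is_cycle V F (a # b # x # r)" and rne: "r \<noteq> []" and axE: "{a, x} \<in> E"
  shows "spanning_cactus V E (insert {a, x} (F - {{a, b}})) \<and>
         card (insert {a, x} (F - {{a, b}})) = card F \<and>
         card (lc V (insert {a, x} (F - {{a, b}}))) < card (lc V F)"
proof -
  define F' where "F' = insert {a, x} (F - {{a, b}})"
  define Pr where "Pr = pe (x # r @ [a])"
  have distC: "distinct (a # b # x # r)" using C by (simp add: is_cycle_def)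
  have neq: "a \<noteq> b" "a \<noteq> x" "b \<noteq> x" "b \<notin> set r" "a \<notin> set r" "x \<notin> set r" using distC by auto
  have ceC: "cycle_edges (a # b # x # r) = insert {a, b} (insert {b, x} Pr)"
    unfolding Pr_def by (simp add: ce_form)
  have ceC2: "cycle_edges (a # x # r) = insert {a, x} Pr"
    unfolding Pr_def by (simp add: ce_form)
  have CF: "cycle_edges (a # b # x # r) \<subseteq> F" using C by (simp add: is_cycle_def)
  have abF: "{a, b} \<in> F" and bxF: "{b, x} \<in> F" and PrF: "Pr \<subseteq> F" using CF ceC by auto
  have bPr: "e \<in> Pr \<Longrightarrow> b \<notin> e" for e using pe_sub[of e "x # r @ [a]"] neq unfolding Pr_def by auto
  have abPr: "{a, b} \<notin> Pr" "{b, x} \<notin> Pr" using bPr by auto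
  have cacF: "\<And>e c1 c2. e \<in> F \<Longrightarrow> is_cycle V F c1 \<Longrightarrow> is_cycle V F c2 \<Longrightarrow> e \<in> cycle_edges c1
      \<Longrightarrow> e \<in> cycle_edges c2 \<Longrightarrow> cycle_edges c1 = cycle_edges c2"
    using cac unfolding cactus_def by blast
  have VC: "set (a # b # x # r) \<subseteq> V" using C by (simp add: is_cycle_def)
  have finF: "finite F" using graph_fin[OF gE] FE finite_subset by blast
  have axF: "{a, x} \<notin> F"
  proof
    assume axF: "{a, x} \<in> F"
    have ceT: "cycle_edges [a, b, x] = {{a, b}, {b, x}, {x, a}}" by (simp add: ce_form)
    have T: "is_cycle V F [a, b, x]" unfolding is_cycle_def using neq VC abF bxF axF ceT
      by (auto simp: insert_commute)
    have "cycle_edges [a, b, x] = cycle_edges (a # b # x # r)"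
      using cacF[OF abF T C] ceT ceC by simp
    moreover have "{x, hd r} \<in> Pr" unfolding Pr_def using rne by (simp add: pe_Cons)
    ultimately have "{x, hd r} \<in> cycle_edges [a, b, x]" using ceC by simp
    then have "hd r \<in> set [a, b, x]" using ce_sub by blast
    then show False using hd_in_set[OF rne] neq by auto
  qed
  have abF': "{a, b} \<notin> F'" unfolding F'_def using neq by (auto simp: doubleton_eq_iff)
  have F'E: "F' \<subseteq> E" unfolding F'_def using FE axE by auto
  have F'sub: "e \<in> F' \<Longrightarrow> e \<noteq> {a, x} \<Longrightarrow> e \<in> F" for e unfolding F'_def by auto
  have toF: "is_cycle V F' d \<Longrightarrow> {a, x} \<notin> cycle_edges d \<Longrightarrow> is_cycle V F d" for d
    unfolding is_cycle_def using F'sub by blast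
  have key: "cycle_edges d = insert {a, x} Pr" if d: "is_cycle V F' d" "{a, x} \<in> cycle_edges d" for d
  proof -
    obtain q where q: "is_cycle V F' (a # x # q)" "cycle_edges (a # x # q) = cycle_edges d"
      using norm[OF d] by blast
    have distq: "distinct (a # x # q)" and qne: "q \<noteq> []" and Vq: "set (a # x # q) \<subseteq> V"
      using q(1) by (auto simp: is_cycle_def)
    define Pq where "Pq = pe (x # q @ [a])"
    have ceq: "cycle_edges (a # x # q) = insert {a, x} Pq" unfolding Pq_def by (simp add: ce_form)
    have axPq: "{a, x} \<notin> Pq" unfolding Pq_def by (rule nopair[OF distq qne])
    have PqF: "Pq \<subseteq> F" using q(1) ceq axPq F'sub by (auto simp: is_cycle_def)
    show ?thesis
    proof (cases "b \<in> set q")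
      case False
      define D where "D = a # b # x # q"
      have ceD: "cycle_edges D = insert {a, b} (insert {b, x} Pq)"
        unfolding D_def Pq_def by (simp add: ce_form)
      have D: "is_cycle V F D" unfolding is_cycle_def D_def
        using distq False neq Vq VC qne abF bxF PqF ceD[unfolded D_def] by auto
      have "cycle_edges D = cycle_edges (a # b # x # q)" unfolding D_def ..
      have "cycle_edges D = cycle_edges (a # b # x # r)"
        using cacF[OF abF D C] ceD ceC by simp
      then have eqs: "insert {a, b} (insert {b, x} Pq) = insert {a, b} (insert {b, x} Pr)"
        using ceD ceC by simp
      have bPq: "e \<in> Pq \<Longrightarrow> b \<notin> e" for e using pe_sub[of e "x # q @ [a]"] neq False
        unfolding Pq_def by auto
      have "Pq = Pr"
      proof -
        have "Pq = insert {a, b} (insert {b, x} Pq) - {{a, b}, {b, x}}" using bPq by auto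
        also have "\<dots> = insert {a, b} (insert {b, x} Pr) - {{a, b}, {b, x}}" using eqs by simp
        also have "\<dots> = Pr" using bPr by auto
        finally show ?thesis .
      qed
      then show ?thesis using q(2) ceq by simp
    next
      case True
      then obtain q1 q2 where qs: "q = q1 @ b # q2" by (meson split_list)
      show ?thesis
      proof (cases "q1 = []")
        case True
        show ?thesis
        proof (cases "q2 = []")
          case True
          then have "Pq = {{x, b}, {b, a}}" unfolding Pq_def using qs \<open>q1 = []\<close> by simp
          then have "{a, b} \<in> F'" using q(1) ceq by (auto simp: is_cycle_def insert_commute)
          then show ?thesis using abF' by simp
        next
          case False
          define D where "D = b # q2 @ [a]"
          have ceD: "cycle_edges D = insert {a, b} (pe (b # q2 @ [a]))"
            using ce_snoc[of D] unfolding D_def by (simp add: insert_commute)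
          have sub: "pe (b # q2 @ [a]) \<subseteq> Pq" unfolding Pq_def using qs \<open>q1 = []\<close> by (auto simp: pe_Cons)
          have distD: "distinct D" "x \<notin> set D" using distq qs \<open>q1 = []\<close> unfolding D_def by auto
          have D: "is_cycle V F D" unfolding is_cycle_def
            using distD False Vq qs \<open>q1 = []\<close> ceD sub PqF abF unfolding D_def by (auto simp: Suc_le_eq)
          have "{a, b} \<in> cycle_edges D" using ceD by simp
          then have "cycle_edges D = cycle_edges (a # b # x # r)"
            using cacF[OF abF D C] ceC by simp
          then have "{b, x} \<in> cycle_edges D" using ceC by simp
          then have "x \<in> set D" using ce_sub by blast
          then show ?thesis using distD by simp
        qed
      next
        case False
        define D where "D = x # q1 @ [b]"
        have ceD: "cycle_edges D = insert {b, x} (pe (x # q1 @ [b]))"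
          using ce_snoc[of D] unfolding D_def by (simp add: insert_commute)
        have "pe (x # q @ [a]) = pe ((x # q1) @ b # (q2 @ [a]))" using qs by simp
        also have "\<dots> = pe ((x # q1) @ [b]) \<union> pe (b # q2 @ [a])" by (rule pe_append_Cons)
        finally have sub: "pe (x # q1 @ [b]) \<subseteq> Pq" unfolding Pq_def by auto
        have distD: "distinct D" "a \<notin> set D" using distq qs unfolding D_def by auto
        have D: "is_cycle V F D" unfolding is_cycle_def
          using distD False Vq qs ceD sub PqF bxF unfolding D_def by (auto simp: Suc_le_eq)
        have "{b, x} \<in> cycle_edges D" using ceD by simp
        then have "cycle_edges D = cycle_edges (a # b # x # r)"
          using cacF[OF bxF D C] ceC by simp
        then have "{a, b} \<in> cycle_edges D" using ceC by simp
        then have "a \<in> set D" using ce_sub by blast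
        then show ?thesis using distD by simp
      qed
    qed
  qed
  have mixed: False if d1: "is_cycle V F' d1" "{a, x} \<in> cycle_edges d1"
    and d2: "is_cycle V F' d2" "{a, x} \<notin> cycle_edges d2"
    and e: "e \<in> cycle_edges d1" "e \<in> cycle_edges d2" for d1 d2 e
  proof -
    have "e \<noteq> {a, x}" using e d2 by auto
    then have "e \<in> Pr" using key[OF d1] e by simp
    then have eC: "e \<in> cycle_edges (a # b # x # r)" using ceC by simp
    have D2: "is_cycle V F d2" using toF d2 by blast
    have "e \<in> F" using eC CF by blast
    then have "cycle_edges d2 = cycle_edges (a # b # x # r)" using cacF[OF _ D2 C] e eC by blast
    then have "{a, b} \<in> cycle_edges d2" using ceC by simp
    then show False using d2 abF' by (auto simp: is_cycle_def)
  qed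
  have cacF': "cactus V F'"
    unfolding cactus_def
  proof (intro conjI ballI allI impI)
    show "graph V F'" using graph_sub[OF gE F'E] .
    show "connected_graph V F'"
    proof (rule conn_mono)
      show "connected_graph V F" using cac by (simp add: cactus_def)
    next
      fix u w assume uw: "{u, w} \<in> F"
      show "(u, w) \<in> {(x, y). {x, y} \<in> F'}\<^sup>*"
      proof (cases "{u, w} = {a, b}")
        case True
        have r1: "(a, x) \<in> {(x, y). {x, y} \<in> F'}" "(x, a) \<in> {(x, y). {x, y} \<in> F'}"
          unfolding F'_def by (auto simp: insert_commute)
        have "{x, b} \<in> F'" unfolding F'_def using bxF neq by (auto simp: insert_commute doubleton_eq_iff)
        then have r2: "(x, b) \<in> {(x, y). {x, y} \<in> F'}" "(b, x) \<in> {(x, y). {x, y} \<in> F'}"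
          by (auto simp: insert_commute)
        have "(a, b) \<in> {(x, y). {x, y} \<in> F'}\<^sup>*" "(b, a) \<in> {(x, y). {x, y} \<in> F'}\<^sup>*"
          using r1 r2 by (meson converse_rtrancl_into_rtrancl r_into_rtrancl)+
        moreover have "(u = a \<and> w = b) \<or> (u = b \<and> w = a)" using True by (simp add: doubleton_eq_iff)
        ultimately show ?thesis by blast
      next
        case False then show ?thesis using uw unfolding F'_def by auto
      qed
    qed
  next
    fix e c1 c2
    assume e: "e \<in> F'" and h: "is_cycle V F' c1 \<and> is_cycle V F' c2 \<and> e \<in> cycle_edges c1 \<and> e \<in> cycle_edges c2"
    show "cycle_edges c1 = cycle_edges c2"
    proof (cases "{a, x} \<in> cycle_edges c1")
      case True
      show ?thesis
      proof (cases "{a, x} \<in> cycle_edges c2")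
        case True
        then show ?thesis using key h \<open>{a, x} \<in> cycle_edges c1\<close> by metis
      next
        case False then show ?thesis using mixed[of c1 c2 e] h True by blast
      qed
    next
      case False
      show ?thesis
      proof (cases "{a, x} \<in> cycle_edges c2")
        case True then show ?thesis using mixed[of c2 c1 e] h False by blast
      next
        case F2: False
        have "is_cycle V F c1" "is_cycle V F c2" using toF h False F2 by blast+
        moreover have "e \<in> F" using F'sub e h False by blast
        ultimately show ?thesis using cacF h by blast
      qed
    qed
  qed
  have cardeq: "card F' = card F"
  proof -
    have "card F' = Suc (card (F - {{a, b}}))" unfolding F'_def using axF finF by simp
    also have "\<dots> = card F" using abF finF card_Diff1_less[OF finF abF] by (simp add: card_Diff_singleton)
    finally show ?thesis .
  qed
  have lenC: "4 \<le> length (a # b # x # r)" using rne by (cases r) auto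
  have inL: "e \<in> cycle_edges (a # b # x # r) \<Longrightarrow> e \<in> lc V F" for e
    unfolding lc_def using CF C lenC by blast
  have Lsub: "lc V F' \<subseteq> insert {a, x} (lc V F - {{a, b}, {b, x}})"
  proof
    fix e assume "e \<in> lc V F'"
    then obtain d where e: "e \<in> F'" and d: "is_cycle V F' d" "4 \<le> length d" "e \<in> cycle_edges d"
      unfolding lc_def by blast
    show "e \<in> insert {a, x} (lc V F - {{a, b}, {b, x}})"
    proof (cases "{a, x} \<in> cycle_edges d")
      case True
      show ?thesis
      proof (cases "e = {a, x}")
        case False
        then have "e \<in> Pr" using key[OF d(1) True] d(3) by simp
        then show ?thesis using inL ceC abPr by auto
      qed simp
    next
      case False
      then have dF: "is_cycle V F d" using toF d by blast
      have eF: "e \<in> F" using F'sub e d(3) False by blast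
      have "e \<in> lc V F" unfolding lc_def using eF dF d by blast
      moreover have "e \<noteq> {a, b}" using e abF' by blast
      moreover have "e \<noteq> {b, x}"
      proof
        assume "e = {b, x}"
        then have "cycle_edges d = cycle_edges (a # b # x # r)" using cacF[OF bxF dF C] d(3) ceC by simp
        then have "{a, b} \<in> cycle_edges d" using ceC by simp
        then show False using d(1) abF' by (auto simp: is_cycle_def)
      qed
      ultimately show ?thesis by blast
    qed
  qed
  have finL: "finite (lc V F)" using finF unfolding lc_def by simp
  have two: "{{a, b}, {b, x}} \<subseteq> lc V F" using inL ceC by auto
  have axL: "{a, x} \<notin> lc V F" using axF unfolding lc_def by blast
  have c2: "card {{a, b}, {b, x}} = 2" using neq by (auto simp: doubleton_eq_iff)
  have "card (lc V F') \<le> card (insert {a, x} (lc V F - {{a, b}, {b, x}}))"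
    using Lsub finL by (intro card_mono) auto
  also have "\<dots> = Suc (card (lc V F - {{a, b}, {b, x}}))" using finL axL by simp
  also have "\<dots> = Suc (card (lc V F) - 2)" using card_Diff_subset[OF _ two] c2 by simp
  also have "\<dots> < card (lc V F)"
  proof -
    have "2 \<le> card (lc V F)" using card_mono[OF finL two] c2 by simp
    then show ?thesis by simp
  qed
  finally have "card (lc V F') < card (lc V F)" .
  then show ?thesis using cacF' F'E cardeq unfolding spanning_cactus_def F'_def by blast
qed

theorem mainTheorem9:
  fixes V :: "'a set" and E :: "'a set set"
  assumes "graph V E" and "connected_graph V E" and "chordal V E"
  shows "\<exists>F. spanning_cactus V E F \<and>
             (\<forall>F'. spanning_cactus V E F' \<longrightarrow> card F' \<le> card F) \<and>
             (\<forall>c. is_cycle V F c \<longrightarrow> length c = 3)"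
proof -
  define A where "A = {F. spanning_cactus V E F}"
  have finE: "finite E" using graph_fin[OF assms(1)] .
  have "A \<subseteq> Pow E" unfolding A_def spanning_cactus_def by auto
  then have finA: "finite A" using finE by (meson finite_Pow_iff finite_subset)
  have neA: "A \<noteq> {}" using exists_sc[OF assms(1,2)] unfolding A_def by blast
  define m where "m = Max (card ` A)"
  have "m \<in> card ` A" unfolding m_def using finA neA by simp
  then obtain F1 where F1: "F1 \<in> A" "card F1 = m" by blast
  have le: "F' \<in> A \<Longrightarrow> card F' \<le> m" for F' unfolding m_def using finA by simp
  obtain F where F: "F \<in> A" "card F = m"
    and minF: "\<And>G. G \<in> A \<and> card G = m \<Longrightarrow> card (lc V F) \<le> card (lc V G)"
    using ex_has_least_nat[of "\<lambda>F. F \<in> A \<and> card F = m" F1 "\<lambda>F. card (lc V F)"] F1 by blast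
  have scF: "spanning_cactus V E F" using F(1) unfolding A_def by simp
  then have cac: "cactus V F" and FE: "F \<subseteq> E" by (auto simp: spanning_cactus_def)
  have tri: "length c = 3" if c: "is_cycle V F c" for c
  proof (rule ccontr)
    assume "length c \<noteq> 3"
    then have l4: "4 \<le> length c" using c by (auto simp: is_cycle_def)
    have cE: "is_cycle V E c" using c FE by (auto simp: is_cycle_def)
    obtain i where i: "i + 2 < length c" "{c ! i, c ! (i + 2)} \<in> E"
      using ear[OF assms(1) assms(3) cE l4] by blast
    define C where "C = rotate i c"
    have CF: "is_cycle V F C" unfolding C_def using cyc_rotate[OF c] .
    have lC: "4 \<le> length C" unfolding C_def using l4 by simp
    obtain a t1 where t1: "C = a # t1" using lC by (cases C) auto
    obtain b t2 where t2: "t1 = b # t2" using lC t1 by (cases t1) auto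
    obtain x r where t3: "t2 = x # r" using lC t1 t2 by (cases t2) auto
    have abxr: "C = a # b # x # r" using t1 t2 t3 by simp
    have rne: "r \<noteq> []" using lC abxr by auto
    have a0: "a = C ! 0" "x = C ! 2" using abxr by simp_all
    have "C ! 0 = c ! ((i + 0) mod length c)" unfolding C_def by (rule nth_rotate) (use i(1) in auto)
    also have "(i + 0) mod length c = i" using i(1) by simp
    finally have aa: "a = c ! i" using a0 by simp
    have "C ! 2 = c ! ((i + 2) mod length c)" unfolding C_def by (rule nth_rotate) (use i(1) in auto)
    also have "(i + 2) mod length c = i + 2" using i(1) by simp
    finally have xx: "x = c ! (i + 2)" using a0 by simp
    note aa xx
    then have axE: "{a, x} \<in> E" using i(2) by simp
    have ex: "spanning_cactus V E (insert {a, x} (F - {{a, b}})) \<and>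
         card (insert {a, x} (F - {{a, b}})) = card F \<and>
         card (lc V (insert {a, x} (F - {{a, b}}))) < card (lc V F)"
      by (rule exchange[OF cac FE assms(1) CF[unfolded abxr] rne axE])
    then have "insert {a, x} (F - {{a, b}}) \<in> A \<and> card (insert {a, x} (F - {{a, b}})) = m"
      unfolding A_def using F(2) by simp
    from minF[OF this] ex show False by simp
  qed
  show ?thesis using scF le F(2) tri unfolding A_def by auto
qed

end
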